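(* Let $\psi\in\mathbb{R}[x]$ be a polynomial of degree $\ge 3$ with homogeneous expansion $\psi=\psi_t+\dots+\psi_m$, where $\psi_t\neq 0$ and $\psi_m\neq 0$. If the constant function $1$ is in the image of the Fischer operator $F_\psi$, then $\psi_m$ is a harmonic divisor.
   Context: $\mathbb{R}[x]$ denotes the real polynomials in $d$ variables, $\Delta$ the Laplacian, and $F_\psi:\mathbb{R}[x]\to\mathbb{R}[x]$, $F_\psi(q)=\Delta(\psi q)$, the Fischer operator. A polynomial $f_j$ is homogeneous of degree $j$ if $f_j(rx)=r^jf_j(x)$ for all $r>0$, $x\in\mathbb{R}^d$; every polynomial of degree $m$ is written uniquely as $f=f_t+\dots+f_m$ with $f_j$ homogeneous of degree $j$, $f_t\ne0$, $f_m\ne 0$. A polynomial $f$ is a harmonic divisor if there exists a non-zero polynomial $q$ such that $fq$ is harmonic. *)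

theory Defs
  imports Complex_Main "HOL-Library.Poly_Mapping"
begin

text \<open>Real polynomials in the variables indexed by a finite type 'n (so d = CARD('n)):
  a polynomial is a finitely supported map from exponent vectors (monomials) to
  real coefficients; multiplication is the library's convolution product.\<close>

type_synonym 'n rpoly = "('n \<Rightarrow>\<^sub>0 nat) \<Rightarrow>\<^sub>0 real"

definition mon_deg :: "('n \<Rightarrow>\<^sub>0 nat) \<Rightarrow> nat" where
  "mon_deg \<alpha> = sum (Poly_Mapping.lookup \<alpha>) (Poly_Mapping.keys \<alpha>)"

definition total_degree :: "'n rpoly \<Rightarrow> nat" where
  "total_degree p = Max (insert 0 (mon_deg ` Poly_Mapping.keys p))"

definition hom_part :: "nat \<Rightarrow> 'n rpoly \<Rightarrow> 'n rpoly" where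
  "hom_part j p = (\<Sum>\<alpha>\<in>{\<alpha>\<in>Poly_Mapping.keys p. mon_deg \<alpha> = j}. Poly_Mapping.single \<alpha> (Poly_Mapping.lookup p \<alpha>))"

definition pdiff :: "'n \<Rightarrow> 'n rpoly \<Rightarrow> 'n rpoly" where
  "pdiff i p = (\<Sum>\<alpha>\<in>Poly_Mapping.keys p.
      Poly_Mapping.single (\<alpha> - Poly_Mapping.single i 1) (of_nat (Poly_Mapping.lookup \<alpha> i) * Poly_Mapping.lookup p \<alpha>))"

definition laplacian :: "'n::finite rpoly \<Rightarrow> 'n rpoly" where
  "laplacian p = (\<Sum>i\<in>UNIV. pdiff i (pdiff i p))"

definition harmonic :: "'n::finite rpoly \<Rightarrow> bool" where
  "harmonic p \<longleftrightarrow> laplacian p = 0"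

definition harmonic_divisor :: "'n::finite rpoly \<Rightarrow> bool" where
  "harmonic_divisor f \<longleftrightarrow> (\<exists>q. q \<noteq> 0 \<and> harmonic (f * q))"

definition fischer :: "'n::finite rpoly \<Rightarrow> 'n rpoly \<Rightarrow> 'n rpoly" where
  "fischer \<psi> q = laplacian (\<psi> * q)"

end

theory Submission
  imports Defs
begin

lemma mon_deg_UNIV: "mon_deg (\<alpha>::'n::finite \<Rightarrow>\<^sub>0 nat) = (\<Sum>i\<in>UNIV. Poly_Mapping.lookup \<alpha> i)"
  unfolding mon_deg_def
  by (rule sum.mono_neutral_left) (auto simp: in_keys_iff)

lemma mon_deg_add: "mon_deg ((\<alpha>::'n::finite \<Rightarrow>\<^sub>0 nat) + \<beta>) = mon_deg \<alpha> + mon_deg \<beta>"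
  by (simp add: mon_deg_UNIV lookup_add sum.distrib)

lemma mon_deg_single1 [simp]: "mon_deg (Poly_Mapping.single (i::'n::finite) (Suc 0)) = 1"
  by (simp add: mon_deg_def)

lemma mon_deg_zero: "mon_deg (0::'n \<Rightarrow>\<^sub>0 nat) = 0"
  by (simp add: mon_deg_def)

lemma lookup_hom_part:
  "Poly_Mapping.lookup (hom_part j (p::'n rpoly)) \<alpha> = (if mon_deg \<alpha> = j then Poly_Mapping.lookup p \<alpha> else 0)"
proof -
  have "Poly_Mapping.lookup (hom_part j (p::'n rpoly)) \<alpha> =
     (\<Sum>\<alpha>'\<in>{\<alpha>\<in>Poly_Mapping.keys p. mon_deg \<alpha> = j}. if \<alpha>' = \<alpha> then Poly_Mapping.lookup p \<alpha>' else 0)"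
    unfolding hom_part_def lookup_sum lookup_single when_def by (rule sum.cong) auto
  also have "\<dots> = (if \<alpha> \<in> {\<alpha>\<in>Poly_Mapping.keys p. mon_deg \<alpha> = j} then Poly_Mapping.lookup p \<alpha> else 0)"
    by (rule sum.delta) simp
  finally show ?thesis by (auto simp: in_keys_iff)
qed

lemma hom_part_sum: "hom_part j (sum f S) = sum (\<lambda>x. hom_part j (f x)) S"
  by (rule poly_mapping_eqI) (simp add: lookup_hom_part lookup_sum)

lemma lookup_pdiff:
  "Poly_Mapping.lookup (pdiff i p) (\<beta>::'n::finite \<Rightarrow>\<^sub>0 nat) =
     of_nat (Poly_Mapping.lookup \<beta> i + 1) * Poly_Mapping.lookup p (\<beta> + Poly_Mapping.single i 1)"
proof -
  let ?e = "Poly_Mapping.single i (1::nat)"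
  have eq: "(of_nat (Poly_Mapping.lookup \<alpha> i) * Poly_Mapping.lookup p \<alpha> when \<alpha> - ?e = \<beta>) =
        (if \<alpha> = \<beta> + ?e then of_nat (Poly_Mapping.lookup \<alpha> i) * Poly_Mapping.lookup p \<alpha> else 0)" for \<alpha>
  proof (cases "Poly_Mapping.lookup \<alpha> i = 0")
    case True
    then have "\<alpha> \<noteq> \<beta> + ?e" by (auto simp: lookup_add)
    with True show ?thesis by (simp add: when_def)
  next
    case False
    have "(\<alpha> - ?e = \<beta>) = (\<alpha> = \<beta> + ?e)"
    proof
      assume h: "\<alpha> - ?e = \<beta>"
      show "\<alpha> = \<beta> + ?e"
        by (rule poly_mapping_eqI) (use False h in \<open>auto simp: lookup_add lookup_minus lookup_single when_def\<close>)
    next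
      assume h: "\<alpha> = \<beta> + ?e"
      show "\<alpha> - ?e = \<beta>"
        by (rule poly_mapping_eqI) (use h in \<open>auto simp: lookup_add lookup_minus lookup_single when_def\<close>)
    qed
    then show ?thesis by (simp add: when_def)
  qed
  have "Poly_Mapping.lookup (pdiff i p) \<beta> = (\<Sum>\<alpha>\<in>Poly_Mapping.keys p. if \<alpha> = \<beta> + ?e then of_nat (Poly_Mapping.lookup \<alpha> i) * Poly_Mapping.lookup p \<alpha> else 0)"
    unfolding pdiff_def lookup_sum lookup_single by (rule sum.cong[OF refl]) (rule eq)
  also have "\<dots> = (if \<beta> + ?e \<in> Poly_Mapping.keys p then of_nat (Poly_Mapping.lookup (\<beta> + ?e) i) * Poly_Mapping.lookup p (\<beta> + ?e) else 0)"
    by (rule sum.delta) simp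
  also have "\<dots> = of_nat (Poly_Mapping.lookup \<beta> i + 1) * Poly_Mapping.lookup p (\<beta> + ?e)"
    by (auto simp: in_keys_iff lookup_add)
  finally show ?thesis .
qed

lemma pdiff_hom_part:
  assumes "j \<ge> 1"
  shows "pdiff i (hom_part j (p::'n::finite rpoly)) = hom_part (j - 1) (pdiff i p)"
  by (rule poly_mapping_eqI) (use assms in \<open>auto simp: lookup_pdiff lookup_hom_part mon_deg_add mon_deg_single1\<close>)

lemma laplacian_hom_part:
  assumes "j \<ge> 2"
  shows "laplacian (hom_part j (p::'n::finite rpoly)) = hom_part (j - 2) (laplacian p)"
proof -
  have "laplacian (hom_part j p) = (\<Sum>i\<in>UNIV. pdiff i (pdiff i (hom_part j p)))"
    by (simp add: laplacian_def)
  also have "\<dots> = (\<Sum>i\<in>UNIV. hom_part (j - 2) (pdiff i (pdiff i p)))"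
  proof (rule sum.cong)
    fix i
    have "pdiff i (pdiff i (hom_part j p)) = pdiff i (hom_part (j-1) (pdiff i p))"
      using assms by (simp add: pdiff_hom_part)
    also have "\<dots> = hom_part (j - 1 - 1) (pdiff i (pdiff i p))"
      using assms by (simp add: pdiff_hom_part)
    finally show "pdiff i (pdiff i (hom_part j p)) = hom_part (j - 2) (pdiff i (pdiff i p))"
      by (simp add: numeral_2_eq_2)
  qed simp
  also have "\<dots> = hom_part (j - 2) (laplacian p)"
    by (simp add: laplacian_def hom_part_sum)
  finally show ?thesis .
qed

lemma key_deg_le: "\<alpha> \<in> Poly_Mapping.keys p \<Longrightarrow> mon_deg \<alpha> \<le> total_degree p"
  unfolding total_degree_def by (rule Max_ge) auto

lemma lookup_beyond: "mon_deg \<alpha> > total_degree p \<Longrightarrow> Poly_Mapping.lookup p \<alpha> = 0"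
  using key_deg_le[of \<alpha> p] by (auto simp: in_keys_iff)

lemma hom_part_top_nonzero:
  assumes "p \<noteq> 0"
  shows "hom_part (total_degree p) p \<noteq> 0"
proof -
  obtain \<alpha> where a: "\<alpha> \<in> Poly_Mapping.keys p" using assms by (metis all_not_in_conv keys_eq_empty)
  have "\<exists>\<beta>\<in>Poly_Mapping.keys p. mon_deg \<beta> = total_degree p"
  proof -
    have "total_degree p \<in> insert 0 (mon_deg ` Poly_Mapping.keys p)"
      unfolding total_degree_def by (rule Max_in) auto
    then show ?thesis
    proof
      assume "total_degree p = 0"
      then show ?thesis using a key_deg_le[OF a] by auto
    qed auto
  qed
  then obtain \<beta> where "\<beta> \<in> Poly_Mapping.keys p" "mon_deg \<beta> = total_degree p" by blast
  then have "Poly_Mapping.lookup (hom_part (total_degree p) p) \<beta> \<noteq> 0"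
    by (simp add: lookup_hom_part in_keys_iff)
  then show ?thesis by auto
qed

lemma hom_part_mult_top:
  fixes p q :: "'n::finite rpoly"
  assumes m_def: "m = total_degree p" and k_def: "k = total_degree q"
  shows "hom_part (m + k) (p * q) = hom_part m p * hom_part k q"
proof (rule poly_mapping_eqI)
  fix \<gamma>
  show "Poly_Mapping.lookup (hom_part (m + k) (p * q)) \<gamma> =
        Poly_Mapping.lookup (hom_part m p * hom_part k q) \<gamma>"
  proof (cases "mon_deg \<gamma> = m + k")
    case True
    have "Poly_Mapping.lookup (hom_part m p * hom_part k q) \<gamma> =
      (\<Sum>l. Poly_Mapping.lookup (hom_part m p) l * (\<Sum>r. Poly_Mapping.lookup (hom_part k q) r when \<gamma> = l + r))"
      by (simp add: lookup_mult)
    also have "\<dots> = (\<Sum>l. Poly_Mapping.lookup p l * (\<Sum>r. Poly_Mapping.lookup q r when \<gamma> = l + r))"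
    proof (rule Sum_any.cong)
      fix l :: "'n \<Rightarrow>\<^sub>0 nat"
      consider "mon_deg l = m" | "mon_deg l > m" | "mon_deg l < m" by linarith
      then show "Poly_Mapping.lookup (hom_part m p) l * (\<Sum>r. Poly_Mapping.lookup (hom_part k q) r when \<gamma> = l + r) =
                 Poly_Mapping.lookup p l * (\<Sum>r. Poly_Mapping.lookup q r when \<gamma> = l + r)"
      proof cases
        case 1
        have "(\<Sum>r. Poly_Mapping.lookup (hom_part k q) r when \<gamma> = l + r) = (\<Sum>r. Poly_Mapping.lookup q r when \<gamma> = l + r)"
          by (rule Sum_any.cong) (use True 1 in \<open>auto simp: when_def lookup_hom_part mon_deg_add\<close>)
        with 1 show ?thesis by (simp add: lookup_hom_part)
      next
        case 2
        then show ?thesis using lookup_beyond[of p l] by (simp add: lookup_hom_part m_def)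
      next
        case 3
        have "(\<Sum>r. Poly_Mapping.lookup q r when \<gamma> = l + r) = Sum_any (\<lambda>r::'n \<Rightarrow>\<^sub>0 nat. 0::real)"
        proof (rule Sum_any.cong)
          fix r :: "'n \<Rightarrow>\<^sub>0 nat"
          show "(Poly_Mapping.lookup q r when \<gamma> = l + r) = 0"
          proof (cases "\<gamma> = l + r")
            case True2: True
            then have "mon_deg r > k" using True 3 by (simp add: mon_deg_add)
            then show ?thesis using lookup_beyond[of q r] by (simp add: k_def)
          qed (simp add: when_def)
        qed
        with 3 show ?thesis by (simp add: lookup_hom_part)
      qed
    qed
    also have "\<dots> = Poly_Mapping.lookup (p * q) \<gamma>" by (simp add: lookup_mult)
    finally show ?thesis using True by (simp add: lookup_hom_part m_def k_def)
  next
    case False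
    have "Poly_Mapping.lookup (hom_part m p * hom_part k q) \<gamma> =
      (\<Sum>l. Poly_Mapping.lookup (hom_part m p) l * (\<Sum>r. Poly_Mapping.lookup (hom_part k q) r when \<gamma> = l + r))"
      by (simp add: lookup_mult)
    also have "\<dots> = Sum_any (\<lambda>l::'n \<Rightarrow>\<^sub>0 nat. 0::real)"
    proof (rule Sum_any.cong)
      fix l :: "'n \<Rightarrow>\<^sub>0 nat"
      show "Poly_Mapping.lookup (hom_part m p) l * (\<Sum>r. Poly_Mapping.lookup (hom_part k q) r when \<gamma> = l + r) = 0"
      proof (cases "mon_deg l = m")
        case True
        have "(\<Sum>r. Poly_Mapping.lookup (hom_part k q) r when \<gamma> = l + r) = Sum_any (\<lambda>r::'n \<Rightarrow>\<^sub>0 nat. 0::real)"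
          by (rule Sum_any.cong) (use True False in \<open>auto simp: when_def lookup_hom_part mon_deg_add\<close>)
        then show ?thesis by simp
      qed (simp add: lookup_hom_part)
    qed
    finally show ?thesis using False by (simp add: lookup_hom_part m_def k_def)
  qed
qed

lemma laplacian_zero: "laplacian (0::'n::finite rpoly) = 0"
  by (rule poly_mapping_eqI) (simp add: laplacian_def lookup_sum lookup_pdiff)

theorem mainTheorem2:
  fixes \<psi> :: "('n::finite \<Rightarrow>\<^sub>0 nat) \<Rightarrow>\<^sub>0 real"
  assumes "total_degree \<psi> \<ge> 3"
    and "1 \<in> Set.range (fischer \<psi>)"
  shows "harmonic_divisor (hom_part (total_degree \<psi>) \<psi>)"
proof -
  obtain q where q: "laplacian (\<psi> * q) = 1"
    using assms(2) by (auto simp: fischer_def)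
  have "q \<noteq> 0" proof
    assume "q = 0"
    then have "laplacian (\<psi> * q) = 0" by (simp add: laplacian_zero)
    with q show False by simp
  qed
  define m where "m = total_degree \<psi>"
  define k where "k = total_degree q"
  have "laplacian (hom_part m \<psi> * hom_part k q) = laplacian (hom_part (m + k) (\<psi> * q))"
    by (simp add: hom_part_mult_top[OF m_def k_def])
  also have "\<dots> = hom_part (m + k - 2) (laplacian (\<psi> * q))"
    using assms(1) by (intro laplacian_hom_part) (simp add: m_def)
  also have "\<dots> = 0"
    unfolding q
    by (rule poly_mapping_eqI) (use assms(1) in \<open>auto simp: lookup_hom_part lookup_one when_def mon_deg_zero m_def\<close>)
  finally have "harmonic (hom_part m \<psi> * hom_part k q)" by (simp add: harmonic_def)
  moreover have "hom_part k q \<noteq> 0" using \<open>q \<noteq> 0\<close> by (simp add: k_def hom_part_top_nonzero)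
  ultimately show ?thesis unfolding harmonic_divisor_def m_def by blast
qed

end
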